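(* Let $f_1,\dots,f_M:\mathbb{R}\to[0,1]$ be continuous strictly increasing cumulative distribution functions, $w_i>0$ with $\sum_{i=1}^M w_i=1$, and $F(x)=\sum_{i=1}^M w_i f_i(x)$. Let $\overline{w}_i=1-w_i$. Then for $p\in(0,1)$, \[\max_{i:\ p-\overline{w}_i\ge 0} f_i^{-1}(p-\overline{w}_i)\le F^{-1}(p)\le \min_{i:\ p+\overline{w}_i\le 1} f_i^{-1}(p+\overline{w}_i).\]
   Context: For a continuous strictly increasing cdf $G$, $G^{-1}(q)$ denotes the $q$-quantile of $G$, i.e. the $x$ with $G(x)=q$ (with $G^{-1}(0)=-\infty$, $G^{-1}(1)=+\infty$ where applicable). *)

theory Defs
  imports "HOL-Analysis.Analysis"
begin

definition cont_strict_cdf :: "(real \<Rightarrow> real) \<Rightarrow> bool" where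
  "cont_strict_cdf G \<longleftrightarrow>
     (\<forall>x. 0 \<le> G x \<and> G x \<le> 1) \<and> continuous_on UNIV G \<and> strict_mono G \<and>
     (G \<longlongrightarrow> 0) at_bot \<and> (G \<longlongrightarrow> 1) at_top"

definition quantile :: "(real \<Rightarrow> real) \<Rightarrow> real \<Rightarrow> ereal" where
  "quantile G q = (if q \<le> 0 then -\<infinity> else if 1 \<le> q then \<infinity> else ereal (THE x. G x = q))"

end

theory Submission
  imports Defs
begin

lemma cdf_quant:
  assumes G: "cont_strict_cdf G" and q: "0 < q" "q < 1"
  shows "G (THE x. G x = q) = q"
proof -
  have c: "continuous_on UNIV G" and sm: "strict_mono G"
    and l0: "(G \<longlongrightarrow> 0) at_bot" and l1: "(G \<longlongrightarrow> 1) at_top"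
    using G unfolding cont_strict_cdf_def by auto
  have "eventually (\<lambda>x. G x < q) at_bot" using order_tendstoD(2)[OF l0 q(1)] .
  then obtain a where a: "G a < q" by (auto simp: eventually_at_bot_linorder)
  have "eventually (\<lambda>x. G x > q) at_top" using order_tendstoD(1)[OF l1 q(2)] .
  then obtain b where b: "G b > q" by (auto simp: eventually_at_top_linorder)
  have "a \<le> b" using a b sm by (metis less_trans not_le strict_mono_less_eq order.strict_iff_not)
  moreover have "\<forall>x. a \<le> x \<and> x \<le> b \<longrightarrow> isCont G x" using c
    by (simp add: continuous_on_eq_continuous_at)
  ultimately obtain x where x: "G x = q" using IVT[of G a q b] a b by auto
  have "inj G" using sm strict_mono_imp_inj_on by blast
  hence "(THE x. G x = q) = x" using x by (auto intro!: the_equality dest: injD)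
  thus ?thesis using x by simp
qed

lemma quant_eq:
  assumes G: "cont_strict_cdf G" and q: "0 < q" "q < 1"
  shows "quantile G q = ereal (THE x. G x = q)"
  using q by (simp add: quantile_def)

theorem proposition5:
  fixes M :: nat and f :: "nat \<Rightarrow> real \<Rightarrow> real" and w :: "nat \<Rightarrow> real"
    and F :: "real \<Rightarrow> real" and p :: real
  assumes cdf: "\<And>i. i \<in> {1..M} \<Longrightarrow> cont_strict_cdf (f i)"
    and wpos: "\<And>i. i \<in> {1..M} \<Longrightarrow> w i > 0"
    and wsum: "(\<Sum>i=1..M. w i) = 1"
    and F_def: "F = (\<lambda>x. \<Sum>i=1..M. w i * f i x)"
    and p: "0 < p" "p < 1"
  shows "(SUP i\<in>{i\<in>{1..M}. p - (1 - w i) \<ge> 0}. quantile (f i) (p - (1 - w i))) \<le> quantile F p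
       \<and> quantile F p \<le> (INF i\<in>{i\<in>{1..M}. p + (1 - w i) \<le> 1}. quantile (f i) (p + (1 - w i)))"
proof -
  have M: "M \<ge> 1" using wsum by (cases M) auto
  have fb: "\<And>i x. i \<in> {1..M} \<Longrightarrow> 0 \<le> f i x \<and> f i x \<le> 1"
    using cdf unfolding cont_strict_cdf_def by blast
  have fsm: "\<And>i. i \<in> {1..M} \<Longrightarrow> strict_mono (f i)"
    using cdf unfolding cont_strict_cdf_def by blast
  have bnd: "w i * f i x \<le> F x \<and> F x \<le> w i * f i x + (1 - w i)" if i: "i \<in> {1..M}" for i x
  proof -
    have split: "F x = w i * f i x + (\<Sum>j\<in>{1..M}-{i}. w j * f j x)"
      unfolding F_def using i by (simp add: sum.remove)
    have ws: "1 = w i + (\<Sum>j\<in>{1..M}-{i}. w j)"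
      using wsum i by (simp add: sum.remove)
    have "(\<Sum>j\<in>{1..M}-{i}. w j * f j x) \<ge> 0"
      by (rule sum_nonneg) (metis fb wpos mult_nonneg_nonneg less_imp_le DiffD1)
    moreover have "(\<Sum>j\<in>{1..M}-{i}. w j * f j x) \<le> (\<Sum>j\<in>{1..M}-{i}. w j)"
      by (rule sum_mono) (metis fb wpos mult_left_le less_imp_le DiffD1)
    ultimately show ?thesis using split ws by linarith
  qed
  have Fcdf: "cont_strict_cdf F"
    unfolding cont_strict_cdf_def
  proof (intro conjI allI)
    fix x
    have "F x \<ge> 0" unfolding F_def
      by (rule sum_nonneg) (metis fb wpos mult_nonneg_nonneg less_imp_le DiffD1)
    thus "0 \<le> F x" .
    have "F x \<le> (\<Sum>i=1..M. w i)" unfolding F_def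
      by (rule sum_mono) (metis fb wpos mult_left_le less_imp_le DiffD1)
    thus "F x \<le> 1" using wsum by simp
  next
    show "continuous_on UNIV F" unfolding F_def
      using cdf unfolding cont_strict_cdf_def
      by (intro continuous_intros) auto
  next
    show "strict_mono F"
    proof (rule strict_monoI)
      fix x y :: real assume xy: "x < y"
      have "(\<Sum>i=1..M. w i * f i x) < (\<Sum>i=1..M. w i * f i y)"
        using M by (intro sum_strict_mono) (auto intro!: mult_strict_left_mono wpos
            strict_monoD[OF fsm] xy)
      thus "F x < F y" by (simp add: F_def)
    qed
  next
    have "((\<lambda>x. \<Sum>i=1..M. w i * f i x) \<longlongrightarrow> (\<Sum>i=1..M. w i * 0)) at_bot"
      using cdf unfolding cont_strict_cdf_def by (intro tendsto_intros) auto
    thus "(F \<longlongrightarrow> 0) at_bot" by (simp add: F_def)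
  next
    have "((\<lambda>x. \<Sum>i=1..M. w i * f i x) \<longlongrightarrow> (\<Sum>i=1..M. w i * 1)) at_top"
      using cdf unfolding cont_strict_cdf_def by (intro tendsto_intros) auto
    thus "(F \<longlongrightarrow> 1) at_top" using wsum by (simp add: F_def)
  qed
  define y where "y = (THE x. F x = p)"
  have Fy: "F y = p" unfolding y_def by (rule cdf_quant[OF Fcdf p])
  have qF: "quantile F p = ereal y" unfolding y_def using p by (simp add: quantile_def)
  have Fsm: "strict_mono F" using Fcdf unfolding cont_strict_cdf_def by blast
  have wle: "\<And>i. i \<in> {1..M} \<Longrightarrow> w i \<le> 1"
  proof -
    fix i assume i: "i \<in> {1..M}"
    have "1 = w i + (\<Sum>j\<in>{1..M}-{i}. w j)"
      using wsum i by (simp add: sum.remove)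
    moreover have "(\<Sum>j\<in>{1..M}-{i}. w j) \<ge> 0" using wpos by (intro sum_nonneg) (auto intro: less_imp_le)
    ultimately show "w i \<le> 1" by linarith
  qed
  show ?thesis
  proof
    show "(SUP i\<in>{i\<in>{1..M}. p - (1 - w i) \<ge> 0}. quantile (f i) (p - (1 - w i))) \<le> quantile F p"
    proof (rule SUP_least)
      fix i assume "i \<in> {i\<in>{1..M}. p - (1 - w i) \<ge> 0}"
      hence i: "i \<in> {1..M}" and q0: "p - (1 - w i) \<ge> 0" by auto
      show "quantile (f i) (p - (1 - w i)) \<le> quantile F p"
      proof (cases "p - (1 - w i) = 0")
        case True thus ?thesis by (simp add: quantile_def)
      next
        case False
        let ?q = "p - (1 - w i)"
        have q: "0 < ?q" "?q < 1" using False q0 p wle[OF i] by auto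
        define x where "x = (THE x. f i x = ?q)"
        have fx: "f i x = ?q" unfolding x_def by (rule cdf_quant[OF cdf[OF i] q])
        have "F x \<le> w i * ?q + (1 - w i)" using bnd[OF i, of x] fx by simp
        also have "\<dots> \<le> ?q + (1 - w i)" using mult_left_le_one_le[of ?q "w i"] q wle[OF i] wpos[OF i]
          by linarith
        finally have "F x \<le> F y" using Fy by simp
        hence "x \<le> y" using Fsm by (simp add: strict_mono_less_eq)
        thus ?thesis using q qF unfolding x_def by (simp add: quantile_def)
      qed
    qed
  next
    show "quantile F p \<le> (INF i\<in>{i\<in>{1..M}. p + (1 - w i) \<le> 1}. quantile (f i) (p + (1 - w i)))"
    proof (rule INF_greatest)
      fix i assume "i \<in> {i\<in>{1..M}. p + (1 - w i) \<le> 1}"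
      hence i: "i \<in> {1..M}" and q1: "p + (1 - w i) \<le> 1" by auto
      show "quantile F p \<le> quantile (f i) (p + (1 - w i))"
      proof (cases "p + (1 - w i) = 1")
        case True thus ?thesis by (simp add: quantile_def)
      next
        case False
        let ?q = "p + (1 - w i)"
        have q: "0 < ?q" "?q < 1" using False q1 p wle[OF i] by auto
        define x where "x = (THE x. f i x = ?q)"
        have fx: "f i x = ?q" unfolding x_def by (rule cdf_quant[OF cdf[OF i] q])
        have "F y = ?q - (1 - w i)" using Fy by simp
        also have "\<dots> \<le> w i * ?q"
        proof -
          have "(1 - w i) * (1 - ?q) \<ge> 0" using q wle[OF i] by simp
          thus ?thesis by (simp add: algebra_simps)
        qed
        also have "\<dots> \<le> F x" using bnd[OF i, of x] fx by simp
        finally have "y \<le> x" using Fsm by (simp add: strict_mono_less_eq)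
        thus ?thesis using q qF unfolding x_def by (simp add: quantile_def)
      qed
    qed
  qed
qed

end
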